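(* For $\zeta\in[a,\tau)$ define $$D(\zeta)=\left[\frac{1}{\epsilon}\Lambda\left(e^{\epsilon(\omega-\tau)}-1\right)-\frac{1-\tau_2}{\epsilon-\widetilde{\epsilon}}\,\frac{1-e^{-r(\omega-\tau)}}{ra_\tau}\left(1-e^{(\widetilde{\epsilon}-\epsilon)(\tau-\zeta)}\right)\right]e^{\epsilon(\tau-\zeta)}$$ (this is $\widetilde{M_1}(\zeta)-\widetilde{M_2}(\zeta)$), and let $$\Lambda_{EP}=\frac{\epsilon(1-\tau_2)\left(1-e^{-r(\omega-\tau)}\right)\left(e^{(\widetilde{\epsilon}-\epsilon)(\tau-a)}-1\right)}{ra_\tau\left(e^{\epsilon(\omega-\tau)}-1\right)(\widetilde{\epsilon}-\epsilon)}.$$ If $\Lambda\le\Lambda_{EP}$, then there exists a critical age $\widetilde{\zeta}\in[a,\tau)$ such that $D(\zeta)<0$ for $a\le\zeta<\widetilde{\zeta}$, $D(\widetilde{\zeta})=0$, and $D(\zeta)>0$ for $\widetilde{\zeta}<\zeta<\tau$ (younger participants prefer EET to PAYGO, older ones prefer PAYGO, age $\widetilde\zeta$ is indifferent). If $\Lambda>\Lambda_{EP}$, then $D(\zeta)>0$ for all $\zeta\in[a,\tau)$ (all these participants prefer PAYGO to EET).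
   Context: Parameters: $r>0$, $\mu>r$, $\sigma>0$, real $\gamma,\xi,\alpha,\beta$; $\nu=(\mu-r)/\sigma$, $\epsilon=\gamma-r-\xi\nu\neq0$, $\widetilde{\epsilon}=\alpha-r-\beta\nu\neq\epsilon$. Ages $a<\tau<\omega$; post-retirement tax rate $\tau_2\in[0,1)$. With survival function $s(x)=e^{-A_m(x-a)-\frac{B_m}{\ln c}(c^x-c^a)}$ (Makeham constants $A_m,B_m,c$) and population growth rate $\rho$: $\Lambda=\frac{\int_a^\tau e^{-(\rho+A_m)(u-a)-\frac{B_m}{\ln c}(c^u-c^a)}du}{\int_\tau^\omega e^{-(\rho+A_m)(u-a)-\frac{B_m}{\ln c}(c^u-c^a)}du}>0$, and $a_\tau=\int_0^\infty e^{-(r+A_m)t-\frac{B_m}{\ln c}c^\tau(c^t-1)}dt\in(0,\infty)$ (annuity factor). Interpretation: $\zeta$ is a participant's age at the decision time, and the sign of $D(\zeta)$ determines whether that participant's utility gains more from the PAYGO contribution rate ($D>0$) or the EET contribution rate ($D<0$). *)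

theory Defs
  imports "HOL-Analysis.Analysis"
begin

definition nu :: "real \<Rightarrow> real \<Rightarrow> real \<Rightarrow> real" where
  "nu r \<mu> \<sigma> = (\<mu> - r) / \<sigma>"

definition eps :: "real \<Rightarrow> real \<Rightarrow> real \<Rightarrow> real \<Rightarrow> real \<Rightarrow> real" where
  "eps r \<mu> \<sigma> \<gamma> \<xi> = \<gamma> - r - \<xi> * nu r \<mu> \<sigma>"

definition eps_tilde :: "real \<Rightarrow> real \<Rightarrow> real \<Rightarrow> real \<Rightarrow> real \<Rightarrow> real" where
  "eps_tilde r \<mu> \<sigma> \<alpha> \<beta> = \<alpha> - r - \<beta> * nu r \<mu> \<sigma>"

text \<open>Integrand of the population-weighted survival (Makeham law).\<close>
definition pop_weight :: "real \<Rightarrow> real \<Rightarrow> real \<Rightarrow> real \<Rightarrow> real \<Rightarrow> real \<Rightarrow> real" where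
  "pop_weight \<rho> Am Bm c a u =
     exp (- (\<rho> + Am) * (u - a) - Bm / ln c * (c powr u - c powr a))"

definition Lambda :: "real \<Rightarrow> real \<Rightarrow> real \<Rightarrow> real \<Rightarrow> real \<Rightarrow> real \<Rightarrow> real \<Rightarrow> real" where
  "Lambda \<rho> Am Bm c a \<tau> \<omega> =
     integral {a..\<tau>} (pop_weight \<rho> Am Bm c a) / integral {\<tau>..\<omega>} (pop_weight \<rho> Am Bm c a)"

definition annuity_integrand :: "real \<Rightarrow> real \<Rightarrow> real \<Rightarrow> real \<Rightarrow> real \<Rightarrow> real \<Rightarrow> real" where
  "annuity_integrand r Am Bm c \<tau> t =
     exp (- (r + Am) * t - Bm / ln c * c powr \<tau> * (c powr t - 1))"

definition annuity :: "real \<Rightarrow> real \<Rightarrow> real \<Rightarrow> real \<Rightarrow> real \<Rightarrow> real" where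
  "annuity r Am Bm c \<tau> = integral {0..} (annuity_integrand r Am Bm c \<tau>)"

definition Dfun :: "real \<Rightarrow> real \<Rightarrow> real \<Rightarrow> real \<Rightarrow> real \<Rightarrow> real \<Rightarrow> real \<Rightarrow> real \<Rightarrow> real \<Rightarrow> real" where
  "Dfun e et L aT r \<tau>2 \<tau> \<omega> \<zeta> =
     (1 / e * L * (exp (e * (\<omega> - \<tau>)) - 1)
      - (1 - \<tau>2) / (e - et) * ((1 - exp (- r * (\<omega> - \<tau>))) / (r * aT))
          * (1 - exp ((et - e) * (\<tau> - \<zeta>))))
     * exp (e * (\<tau> - \<zeta>))"

definition Lambda_EP :: "real \<Rightarrow> real \<Rightarrow> real \<Rightarrow> real \<Rightarrow> real \<Rightarrow> real \<Rightarrow> real \<Rightarrow> real \<Rightarrow> real" where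
  "Lambda_EP e et aT r \<tau>2 a \<tau> \<omega> =
     e * (1 - \<tau>2) * (1 - exp (- r * (\<omega> - \<tau>))) * (exp ((et - e) * (\<tau> - a)) - 1)
     / (r * aT * (exp (e * (\<omega> - \<tau>)) - 1) * (et - e))"

end

theory Submission
  imports Defs
begin

lemma expdiv_pos: fixes d t :: real assumes "d \<noteq> 0" "0 < t" shows "0 < (exp (d * t) - 1)/d"
proof (cases "d > 0")
  case True
  then have "exp (d * t) > 1" using assms by simp
  then show ?thesis using True by simp
next
  case False
  then have "d < 0" using assms by simp
  then have "exp (d * t) < 1" using assms by (simp add: mult_neg_pos)
  then show ?thesis using \<open>d<0\<close> by (simp add: divide_neg_neg)
qed

lemma expdiv_mono: fixes d s1 s2 :: real assumes "d \<noteq> 0" "s2 < s1"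
  shows "(exp (d * s2) - 1)/d < (exp (d * s1) - 1)/d"
proof -
  have "0 < (exp (d * (s1-s2)) - 1)/d" using expdiv_pos assms by simp
  moreover have "(exp (d * s1) - 1)/d - (exp (d * s2) - 1)/d = exp (d * s2) * ((exp (d * (s1-s2)) - 1)/d)"
  proof -
    have "exp (d * s1) = exp (d * s2) * exp (d * (s1-s2))" by (simp flip: exp_add add: algebra_simps)
    then show ?thesis using assms(1) by (simp add: field_simps)
  qed
  ultimately show ?thesis by (smt (verit) exp_gt_zero mult_pos_pos)
qed

theorem theorem3p2:
  fixes r \<mu> \<sigma> \<gamma> \<xi> \<alpha> \<beta> \<rho> Am Bm c a \<tau> \<omega> \<tau>2 :: real
  defines "e \<equiv> eps r \<mu> \<sigma> \<gamma> \<xi>"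
      and "et \<equiv> eps_tilde r \<mu> \<sigma> \<alpha> \<beta>"
      and "L \<equiv> Lambda \<rho> Am Bm c a \<tau> \<omega>"
      and "aT \<equiv> annuity r Am Bm c \<tau>"
  defines "D \<equiv> Dfun e et L aT r \<tau>2 \<tau> \<omega>"
      and "LEP \<equiv> Lambda_EP e et aT r \<tau>2 a \<tau> \<omega>"
  assumes "0 < r" and "r < \<mu>" and "0 < \<sigma>"
      and "e \<noteq> 0" and "et \<noteq> e"
      and "a < \<tau>" and "\<tau> < \<omega>"
      and "0 \<le> \<tau>2" and "\<tau>2 < 1"
      and "0 < c" and "c \<noteq> 1"
      and "0 < L"
      and "annuity_integrand r Am Bm c \<tau> integrable_on {0..}" and "0 < aT"
  shows "(L \<le> LEP \<longrightarrow>
            (\<exists>\<zeta>c. a \<le> \<zeta>c \<and> \<zeta>c < \<tau> \<and>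
                 (\<forall>\<zeta>. a \<le> \<zeta> \<and> \<zeta> < \<zeta>c \<longrightarrow> D \<zeta> < 0) \<and>
                 D \<zeta>c = 0 \<and>
                 (\<forall>\<zeta>. \<zeta>c < \<zeta> \<and> \<zeta> < \<tau> \<longrightarrow> 0 < D \<zeta>)))
       \<and> (LEP < L \<longrightarrow> (\<forall>\<zeta>. a \<le> \<zeta> \<and> \<zeta> < \<tau> \<longrightarrow> 0 < D \<zeta>))"
proof -
  define d where "d = et - e"
  have d0: "d \<noteq> 0" using assms by (simp add: d_def)
  define K where "K = (1 - \<tau>2) * ((1 - exp (- r * (\<omega> - \<tau>))) / (r * aT))"
  define A where "A = (exp (e * (\<omega> - \<tau>)) - 1) / e"
  have "exp (- r * (\<omega> - \<tau>)) < 1" using assms by (simp add: mult_pos_pos)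
  then have K0: "K > 0" unfolding K_def using assms by (simp add: mult_pos_pos)
  have A0: "A > 0" unfolding A_def using expdiv_pos assms by simp
  define g where "g \<zeta> = L * A - K * ((exp (d * (\<tau>-\<zeta>)) - 1)/d)" for \<zeta>
  have Dg: "D \<zeta> = g \<zeta> * exp (e * (\<tau> - \<zeta>))" for \<zeta>
  proof -
    have "(1 - \<tau>2) / (e - et) * ((1 - exp (- r * (\<omega> - \<tau>))) / (r * aT)) * (1 - exp ((et - e) * (\<tau> - \<zeta>)))
        = K * ((exp (d * (\<tau>-\<zeta>)) - 1)/d)"
      proof -
      have n1: "e - et \<noteq> 0" "et - e \<noteq> 0" "r \<noteq> 0" "aT \<noteq> 0" using assms by auto
      show ?thesis unfolding K_def d_def using n1 by (simp add: field_simps)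
    qed
    then show ?thesis unfolding D_def Dfun_def g_def A_def by simp
  qed
  have gmono: "g x < g y" if "x < y" for x y
    unfolding g_def using expdiv_mono[OF d0, of "\<tau>-y" "\<tau>-x"] that K0
    by (smt (verit) mult_strict_left_mono times_divide_eq_right)
  have LEPeq: "LEP = K * ((exp (d * (\<tau>-a)) - 1)/d) / A"
    unfolding LEP_def Lambda_EP_def K_def A_def d_def using assms(10,11) by (simp add: field_simps)
  have LEPiff: "L \<le> LEP \<longleftrightarrow> g a \<le> 0" "LEP < L \<longleftrightarrow> g a > 0"
  proof -
    define X where "X = K * ((exp (d * (\<tau>-a)) - 1)/d)"
    have "LEP = X / A" unfolding LEPeq X_def ..
    moreover have "g a = L * A - X" unfolding g_def X_def ..
    ultimately show "L \<le> LEP \<longleftrightarrow> g a \<le> 0" "LEP < L \<longleftrightarrow> g a > 0"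
      using pos_le_divide_eq[OF A0, of L X] pos_divide_less_eq[OF A0, of X L] by auto
  qed
  have gt: "g \<tau> > 0" unfolding g_def using A0 assms by simp
  have sD: "0 < D z \<longleftrightarrow> 0 < g z" "D z < 0 \<longleftrightarrow> g z < 0" "D z = 0 \<longleftrightarrow> g z = 0" for z
    unfolding Dg by (simp_all add: zero_less_mult_iff mult_less_0_iff)
  have part1: "\<exists>\<zeta>c. a \<le> \<zeta>c \<and> \<zeta>c < \<tau> \<and>
                 (\<forall>\<zeta>. a \<le> \<zeta> \<and> \<zeta> < \<zeta>c \<longrightarrow> D \<zeta> < 0) \<and>
                 D \<zeta>c = 0 \<and>
                 (\<forall>\<zeta>. \<zeta>c < \<zeta> \<and> \<zeta> < \<tau> \<longrightarrow> 0 < D \<zeta>)" if ga: "g a \<le> 0"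
  proof -
    have "continuous_on {a..\<tau>} g" unfolding g_def by (intro continuous_intros) (use d0 in auto)
    then obtain x where x: "a \<le> x" "x \<le> \<tau>" "g x = 0"
      using IVT'[of g a 0 \<tau>] ga gt \<open>a < \<tau>\<close> by force
    have "x \<noteq> \<tau>" using x gt by auto
    then show ?thesis using x gmono sD
      by (intro exI[of _ x]) (smt (verit))
  qed
  have part2: "\<forall>\<zeta>. a \<le> \<zeta> \<and> \<zeta> < \<tau> \<longrightarrow> 0 < D \<zeta>" if "g a > 0"
    using that gmono sD by (smt (verit))
  show ?thesis using part1 part2 LEPiff by blast
qed

end
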